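(* Fix $a(x)=|x|^{-\alpha}$ for $x\in\mathbb{Z}_{\neq0}$ and real $\alpha>3/2$, and for $\Delta\in\mathbb{R}$ let $$\tau_{\mathrm{eff}}^{-1}(\alpha,\Delta)=\frac12\sqrt{\frac{A(\alpha)\Delta^2+2B(\alpha)\Delta+C(\alpha)}{\sum_{n\neq0}n^2a(n)^2}},$$ with $A,B,C$ as below. Let $\Delta=\Delta(\alpha)$ satisfy $c^{\alpha}\Delta(\alpha)\to k$ as $\alpha\to\infty$, for constants $c>1$ and $k\in\mathbb{R}$. Then, as $\alpha\to\infty$: (i) if $1<c<2$ and $k\neq0$, then $\tau_{\mathrm{eff}}^{-1}(\alpha,\Delta(\alpha))\big/\bigl(|\Delta(\alpha)|/\sqrt2\bigr)\to1$; (ii) if $c=2$, then $2^{\alpha}\tau_{\mathrm{eff}}^{-1}(\alpha,\Delta(\alpha))\to\sqrt{\bigl((k-3)^2+1\bigr)/2}$, equivalently $\tau_{\mathrm{eff}}^{-1}\sim\sqrt{(\Delta^2-6\cdot2^{-\alpha}\Delta+10\cdot4^{-\alpha})/2}$; (iii) if $c>2$, then $2^{\alpha}\tau_{\mathrm{eff}}^{-1}(\alpha,\Delta(\alpha))\to\sqrt5$. In particular $2^{\alpha}\tau_{\mathrm{eff}}^{-1}(\alpha,\Delta^*(\alpha))\to1/\sqrt2$, where $\Delta^*(\alpha)=-B(\alpha)/A(\alpha)$, while $2^{\alpha}\tau_{\mathrm{eff}}^{-1}(\alpha,e^{2-\alpha})\to\sqrt5$.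
   Context: Here, with $a(x)=|x|^{-\alpha}$ and all sums over $u,v\in\mathbb{Z}_{\neq0}$ with $u+v\neq0$: $A=\sum(u+v)^2a(u+v)^2(a(u)-a(v))^2$, $B=\sum(u^2-v^2)a(u)a(v)a(u+v)(a(u)-a(v))$, $C=\sum(u-v)^2a(u)^2a(v)^2$. The quantity $\tau_{\mathrm{eff}}^{-1}$ is the estimated decay rate of the spin current of the XXZ chain with couplings $a(r)$ and $b(r)=\Delta a(r)$. *)

theory Defs
  imports "HOL-Analysis.Analysis"
begin

definition acoup :: "real \<Rightarrow> int \<Rightarrow> real" where
  "acoup \<alpha> x = \<bar>real_of_int x\<bar> powr (- \<alpha>)"

definition idxUV :: "(int \<times> int) set" where
  "idxUV = {(u, v). u \<noteq> 0 \<and> v \<noteq> 0 \<and> u + v \<noteq> 0}"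

definition coefA :: "real \<Rightarrow> real" where
  "coefA \<alpha> = (\<Sum>\<^sub>\<infinity>(u, v)\<in>idxUV.
     (real_of_int (u + v))\<^sup>2 * (acoup \<alpha> (u + v))\<^sup>2 * (acoup \<alpha> u - acoup \<alpha> v)\<^sup>2)"

definition coefB :: "real \<Rightarrow> real" where
  "coefB \<alpha> = (\<Sum>\<^sub>\<infinity>(u, v)\<in>idxUV.
     (real_of_int u ^ 2 - real_of_int v ^ 2) * acoup \<alpha> u * acoup \<alpha> v * acoup \<alpha> (u + v)
       * (acoup \<alpha> u - acoup \<alpha> v))"

definition coefC :: "real \<Rightarrow> real" where
  "coefC \<alpha> = (\<Sum>\<^sub>\<infinity>(u, v)\<in>idxUV.
     (real_of_int (u - v))\<^sup>2 * (acoup \<alpha> u)\<^sup>2 * (acoup \<alpha> v)\<^sup>2)"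

definition normS :: "real \<Rightarrow> real" where
  "normS \<alpha> = (\<Sum>\<^sub>\<infinity>n\<in>{n::int. n \<noteq> 0}. (real_of_int n)\<^sup>2 * (acoup \<alpha> n)\<^sup>2)"

definition tau_eff_inv :: "real \<Rightarrow> real \<Rightarrow> real" where
  "tau_eff_inv \<alpha> \<Delta> = (1/2) * sqrt ((coefA \<alpha> * \<Delta>\<^sup>2 + 2 * coefB \<alpha> * \<Delta> + coefC \<alpha>) / normS \<alpha>)"

end

theory Submission
  imports Defs
begin


lemma dc_infsum:
  fixes f :: "real \<Rightarrow> 'a \<Rightarrow> real"
  assumes G: "G summable_on S"
    and lim: "\<And>x. x\<in>S \<Longrightarrow> ((\<lambda>\<alpha>. f \<alpha> x) \<longlongrightarrow> L x) at_top"
    and bnd: "\<forall>\<^sub>F \<alpha> in at_top. \<forall>x\<in>S. \<bar>f \<alpha> x\<bar> \<le> G x"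
  shows "((\<lambda>\<alpha>. infsum (f \<alpha>) S) \<longlongrightarrow> infsum L S) at_top"
proof -
  obtain a0 where a0: "\<And>\<alpha>. \<alpha> \<ge> a0 \<Longrightarrow> \<forall>x\<in>S. \<bar>f \<alpha> x\<bar> \<le> G x"
    using bnd by (auto simp: eventually_at_top_linorder)
  have Gnn: "G x \<ge> 0" if "x\<in>S" for x using a0[of a0] that by force
  have "(\<lambda>x. norm (G x)) summable_on S" using G Gnn
    by (metis (no_types, lifting) real_norm_def abs_of_nonneg summable_on_cong)
  hence Gabs: "Infinite_Set_Sum.abs_summable_on G S" using abs_summable_equivalent by blast
  have Lb: "\<bar>L x\<bar> \<le> G x" if "x\<in>S" for x
  proof (rule tendsto_le[OF _ tendsto_const])
    show "((\<lambda>\<alpha>. \<bar>f \<alpha> x\<bar>) \<longlongrightarrow> \<bar>L x\<bar>) at_top" using lim[OF that] by (rule tendsto_rabs)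
    show "\<forall>\<^sub>F \<alpha> in at_top. \<bar>f \<alpha> x\<bar> \<le> G x" using bnd that by (auto elim: eventually_mono)
  qed simp
  have Labs: "Infinite_Set_Sum.abs_summable_on L S"
    by (rule abs_summable_on_comparison_test'[OF Gabs]) (use Lb in auto)
  have fabs: "Infinite_Set_Sum.abs_summable_on (f \<alpha>) S" if "\<alpha> \<ge> a0" for \<alpha>
    by (rule abs_summable_on_comparison_test'[OF Gabs]) (use a0[OF that] in auto)
  have "((\<lambda>\<alpha>. integral\<^sup>L (count_space S) (f \<alpha>)) \<longlongrightarrow> integral\<^sup>L (count_space S) L) at_top"
  proof (rule integral_dominated_convergence_at_top[where w=G])
    show "integrable (count_space S) G" using Gabs by (simp add: abs_summable_on_def)
    show "AE x in count_space S. ((\<lambda>i. f i x) \<longlongrightarrow> L x) at_top"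
      using lim by (simp add: AE_count_space)
    show "\<forall>\<^sub>F i in at_top. AE x in count_space S. norm (f i x) \<le> G x"
      using bnd by (auto simp: AE_count_space elim!: eventually_mono)
  qed auto
  moreover have "\<forall>\<^sub>F \<alpha> in at_top. integral\<^sup>L (count_space S) (f \<alpha>) = infsum (f \<alpha>) S"
    using eventually_ge_at_top[of a0]
  proof eventually_elim
    case (elim \<alpha>) thus ?case using fabs[OF elim] infsetsum_infsum by (simp add: infsetsum_def[symmetric])
  qed
  moreover have "integral\<^sup>L (count_space S) L = infsum L S"
    using Labs by (simp add: infsetsum_def[symmetric] infsetsum_infsum)
  ultimately show ?thesis by (auto intro: Lim_transform_eventually)
qed

lemma lim_pow:
  fixes c m :: real assumes "0 < c" "c \<le> m"
  shows "((\<lambda>\<alpha>. (c/m) powr \<alpha>) \<longlongrightarrow> (if m = c then 1 else 0)) at_top"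
proof (cases "m = c")
  case True thus ?thesis using assms by simp
next
  case False
  hence x: "0 < c/m" "c/m < 1" using assms by (auto simp: field_simps)
  have "ln (c/m) < 0" using x by simp
  hence "filterlim (\<lambda>\<alpha>. ln (c/m) * \<alpha>) at_bot at_top"
    by (intro filterlim_tendsto_neg_mult_at_bot[OF tendsto_const] filterlim_ident)
  hence "((\<lambda>\<alpha>. exp (ln (c/m) * \<alpha>)) \<longlongrightarrow> 0) at_top"
    by (rule filterlim_compose[OF exp_at_bot])
  moreover have "(c/m) powr \<alpha> = exp (ln (c/m) * \<alpha>)" for \<alpha> using x assms by (simp add: powr_def mult.commute)
  ultimately show ?thesis using False by simp
qed

lemma pow_le2:
  fixes c m :: real assumes "0 < c" "c \<le> m" "2 \<le> \<alpha>"
  shows "(c/m) powr \<alpha> \<le> (c/m)^2" "0 \<le> (c/m) powr \<alpha>"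
proof -
  have "(c/m) powr \<alpha> \<le> (c/m) powr 2" using assms by (intro powr_mono') auto
  thus "(c/m) powr \<alpha> \<le> (c/m)^2" using assms by (simp add: powr_realpow)
qed simp

definition gg :: "int \<Rightarrow> real" where "gg x = 1 / (real_of_int x)^2"

lemma gg_summable: "gg summable_on {x. x \<noteq> 0}"
proof -
  have s: "(\<lambda>n::nat. 1 / (real n + 1)^2) summable_on UNIV"
    using inverse_squares_sums by (intro has_sum_imp_summable sums_nonneg_imp_has_sum) (auto simp: add.commute)
  have "{x::int. x \<noteq> 0} = (\<lambda>n. int n + 1) ` UNIV \<union> (\<lambda>n. - (int n + 1)) ` UNIV"
  proof (safe)
    fix x :: int assume "x \<noteq> 0" "x \<notin> (\<lambda>n. - (int n + 1)) ` UNIV"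
    show "x \<in> (\<lambda>n. int n + 1) ` UNIV"
    proof (cases "x > 0")
      case True thus ?thesis by (intro image_eqI[of _ _ "nat (x - 1)"]) auto
    next
      case False
      hence "x = - (int (nat (-x-1)) + 1)" using \<open>x \<noteq> 0\<close> by simp
      hence "x \<in> (\<lambda>n. - (int n + 1)) ` UNIV" by blast
      thus ?thesis using \<open>x \<notin> _\<close> by blast
    qed
  qed auto
  moreover have "gg summable_on (\<lambda>n. int n + 1) ` UNIV"
    by (subst summable_on_reindex) (use s in \<open>auto simp: inj_on_def gg_def o_def add.commute\<close>)
  moreover have "gg summable_on (\<lambda>n. - (int n + 1)) ` UNIV"
  proof (subst summable_on_reindex)
    have "(gg \<circ> (\<lambda>n. - (int n + 1))) = (\<lambda>n::nat. 1 / (real n + 1)^2)"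
      by (auto simp: gg_def fun_eq_iff power2_eq_square algebra_simps)
    thus "(gg \<circ> (\<lambda>n. - (int n + 1))) summable_on UNIV" using s by simp
  qed (auto simp: inj_on_def)
  moreover have "(\<lambda>n. int n + 1) ` UNIV \<inter> (\<lambda>n. - (int n + 1)) ` UNIV = {}" by auto
  ultimately show ?thesis by (metis summable_on_Un_disjoint)
qed

definition GG :: "int \<times> int \<Rightarrow> real" where "GG z = gg (fst z) * gg (snd z)"

lemma GG_summable: "GG summable_on idxUV"
proof -
  have "GG summable_on {x::int. x \<noteq> 0} \<times> {x. x \<noteq> 0}"
  proof (rule summable_on_SigmaI[where g = "\<lambda>u. gg u * infsum gg {x. x \<noteq> 0}"])
    show "((\<lambda>y. GG (x, y)) has_sum gg x * infsum gg {x. x \<noteq> 0}) {x. x \<noteq> 0}" for x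
      unfolding GG_def by (simp add: has_sum_cmult_right gg_summable)
    show "(\<lambda>u. gg u * infsum gg {x. x \<noteq> 0}) summable_on {x. x \<noteq> 0}"
      by (intro summable_on_cmult_left gg_summable)
  qed (auto simp: GG_def gg_def)
  thus ?thesis by (rule summable_on_subset) (auto simp: idxUV_def)
qed


lemma acoup_eq: "x \<noteq> 0 \<Longrightarrow> acoup \<alpha> x = (1 / \<bar>real_of_int x\<bar>) powr \<alpha>"
  by (simp add: acoup_def powr_divide powr_minus_divide)

lemma pm: "0 \<le> (a::real) \<Longrightarrow> 0 \<le> b \<Longrightarrow> (a powr \<alpha>) * (b powr \<alpha>) = (a*b) powr \<alpha>"
  by (metis powr_mult)

lemma sq_ge1: "(n::int) \<noteq> 0 \<Longrightarrow> 1 \<le> (real_of_int n)\<^sup>2"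
proof -
  assume "n \<noteq> 0"
  hence "1 \<le> \<bar>n\<bar>" by simp
  hence "1*1 \<le> \<bar>n\<bar>*\<bar>n\<bar>" by (intro mult_mono) auto
  hence "1 \<le> n*n" by (simp add: abs_mult_self_eq)
  hence "1 \<le> real_of_int (n*n)" by linarith
  thus ?thesis by (simp add: power2_eq_square)
qed

lemma normS_lim: "(normS \<longlongrightarrow> 2) at_top"
proof -
  define f where "f \<alpha> n = (real_of_int n)\<^sup>2 * (1 / (real_of_int n)\<^sup>2) powr \<alpha>" for \<alpha> n
  define L where "L n = (real_of_int n)\<^sup>2 * (if (real_of_int n)\<^sup>2 = 1 then 1 else 0)" for n
  have eq: "normS \<alpha> = infsum (f \<alpha>) {n. n \<noteq> 0}" for \<alpha>
    unfolding normS_def f_def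
  proof (rule infsum_cong)
    fix n :: int assume "n \<in> {n. n \<noteq> 0}"
    hence "(acoup \<alpha> n)\<^sup>2 = (1 / (real_of_int n)\<^sup>2) powr \<alpha>"
      by (simp add: acoup_eq power2_eq_square pm)
    thus "(real_of_int n)\<^sup>2 * (acoup \<alpha> n)\<^sup>2 = (real_of_int n)\<^sup>2 * (1 / (real_of_int n)\<^sup>2) powr \<alpha>" by simp
  qed
  have "((\<lambda>\<alpha>. infsum (f \<alpha>) {n. n \<noteq> 0}) \<longlongrightarrow> infsum L {n. n \<noteq> 0}) at_top"
  proof (rule dc_infsum[OF gg_summable])
    fix n :: int assume n: "n \<in> {n. n \<noteq> 0}"
    have "1 \<le> (real_of_int n)\<^sup>2" using n by (simp add: sq_ge1)
    then show "((\<lambda>\<alpha>. f \<alpha> n) \<longlongrightarrow> L n) at_top"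
      unfolding f_def L_def by (intro tendsto_mult_left lim_pow) auto
  next
    show "\<forall>\<^sub>F \<alpha> in at_top. \<forall>x\<in>{n. n \<noteq> 0}. \<bar>f \<alpha> x\<bar> \<le> gg x"
      using eventually_ge_at_top[of 2]
    proof eventually_elim
      case (elim \<alpha>)
      show ?case
      proof
        fix n :: int assume n: "n \<in> {n. n \<noteq> 0}"
        have m: "1 \<le> (real_of_int n)\<^sup>2" using n by (simp add: sq_ge1)
        have "\<bar>f \<alpha> n\<bar> = (real_of_int n)\<^sup>2 * (1 / (real_of_int n)\<^sup>2) powr \<alpha>" by (simp add: f_def)
        also have "\<dots> \<le> (real_of_int n)\<^sup>2 * (1 / (real_of_int n)\<^sup>2)^2"
          by (intro mult_left_mono pow_le2) (use m elim in auto)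
        also have "\<dots> = gg n" using n by (simp add: gg_def field_simps power2_eq_square)
        finally show "\<bar>f \<alpha> n\<bar> \<le> gg n" .
      qed
    qed
  qed
  moreover have "infsum L {n. n \<noteq> 0} = infsum L {-1, 1}"
  proof (rule infsum_cong_neutral)
    fix n :: int assume "n \<in> {n. n \<noteq> 0} - {-1,1}"
    hence "(real_of_int n)\<^sup>2 \<noteq> 1"
    proof -
      assume "n \<in> {n. n \<noteq> 0} - {-1,1}"
      hence "n*n \<noteq> 1" by (auto simp: zmult_eq_1_iff)
      hence "real_of_int (n*n) \<noteq> 1" by linarith
      thus ?thesis by (simp add: power2_eq_square)
    qed
    thus "L n = 0" by (simp add: L_def)
  qed auto
  moreover have "infsum L {-1, 1} = 2" by (simp add: L_def)
  ultimately show ?thesis by (simp add: eq[abs_def])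
qed



definition TT :: "(int \<times> int) set" where
 "TT = {(-2,-2),(-2,-1),(-2,1),(-1,-2),(-1,-1),(-1,2),(1,-2),(1,1),(1,2),(2,-1),(2,1),(2,2)}"

lemma box: assumes "u \<noteq> 0" "v \<noteq> 0" "u + v \<noteq> 0" "(u,v) \<notin> TT"
  shows "3 \<le> \<bar>u\<bar> \<or> 3 \<le> \<bar>v\<bar>"
proof (rule ccontr)
  assume "\<not> ?thesis"
  hence "u = -2 \<or> u = -1 \<or> u = 1 \<or> u = 2" "v = -2 \<or> v = -1 \<or> v = 1 \<or> v = 2" using assms by arith+
  thus False using assms by (auto simp: TT_def)
qed

lemma sq_ge: "(k::int) \<le> \<bar>u\<bar> \<Longrightarrow> 0 \<le> k \<Longrightarrow> (real_of_int k)^2 \<le> (real_of_int u)^2"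
proof -
  assume a: "k \<le> \<bar>u\<bar>" "0 \<le> k"
  hence "real_of_int k \<le> \<bar>real_of_int u\<bar>" by linarith
  hence "(real_of_int k)^2 \<le> \<bar>real_of_int u\<bar>^2" using a by (intro power_mono) auto
  thus ?thesis by simp
qed

lemma prod_ge: "(1::real) \<le> b \<Longrightarrow> 0 \<le> a \<Longrightarrow> a \<le> a * b"
  by (metis mult.right_neutral mult_left_mono)

lemma tri_sq: fixes x y :: real assumes "1 \<le> \<bar>x\<bar>" "1 \<le> \<bar>y\<bar>"
  shows "(x - y)^2 \<le> 4 * x^2 * y^2"
proof -
  have "(\<bar>x\<bar> - 1) * (\<bar>y\<bar> - 1) \<ge> 0" using assms by simp
  hence "\<bar>x\<bar> + \<bar>y\<bar> \<le> 2 * \<bar>x\<bar> * \<bar>y\<bar>" using assms by (simp add: algebra_simps)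
  moreover have "\<bar>x - y\<bar> \<le> \<bar>x\<bar> + \<bar>y\<bar>" by simp
  ultimately have "\<bar>x - y\<bar> \<le> 2 * \<bar>x\<bar> * \<bar>y\<bar>" by linarith
  hence "\<bar>x - y\<bar>^2 \<le> (2 * \<bar>x\<bar> * \<bar>y\<bar>)^2" by (intro power_mono) auto
  thus ?thesis by (simp add: power_mult_distrib)
qed

lemma sqpowr: "((x::real)^2) powr \<alpha> = (\<bar>x\<bar> powr \<alpha>)^2"
proof -
  have "(x^2) powr \<alpha> = (\<bar>x\<bar> * \<bar>x\<bar>) powr \<alpha>" by (simp add: power2_eq_square abs_mult_self_eq)
  also have "\<dots> = \<bar>x\<bar> powr \<alpha> * \<bar>x\<bar> powr \<alpha>" by (metis abs_ge_zero powr_mult)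
  finally show ?thesis by (simp add: power2_eq_square)
qed

lemma C_rewrite: assumes "u \<noteq> 0" "v \<noteq> 0"
  shows "4 powr \<alpha> * ((real_of_int (u - v))\<^sup>2 * (acoup \<alpha> u)\<^sup>2 * (acoup \<alpha> v)\<^sup>2)
     = (real_of_int (u - v))\<^sup>2 * (4 / ((real_of_int u)\<^sup>2 * (real_of_int v)\<^sup>2)) powr \<alpha>"
proof -
  have "(4 / ((real_of_int u)\<^sup>2 * (real_of_int v)\<^sup>2)) powr \<alpha>
     = 4 powr \<alpha> / (((real_of_int u)\<^sup>2) powr \<alpha> * ((real_of_int v)\<^sup>2) powr \<alpha>)"
    by (simp add: powr_divide powr_mult)
  also have "\<dots> = 4 powr \<alpha> * (acoup \<alpha> u)\<^sup>2 * (acoup \<alpha> v)\<^sup>2"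
    by (simp add: sqpowr acoup_def powr_minus_divide power_divide)
  finally show ?thesis by simp
qed

lemma C_lim: "((\<lambda>\<alpha>. 4 powr \<alpha> * coefC \<alpha>) \<longlongrightarrow> 40) at_top"
proof -
  define m where "m u v = (real_of_int u)\<^sup>2 * (real_of_int v)\<^sup>2" for u v
  define f where "f \<alpha> z = (case z of (u,v) \<Rightarrow> (real_of_int (u - v))\<^sup>2 * (4 / m u v) powr \<alpha>)" for \<alpha> z
  define L where "L z = (case z of (u,v) \<Rightarrow> (real_of_int (u - v))\<^sup>2 * (if m u v = 4 then 1 else 0))" for z
  have eq: "4 powr \<alpha> * coefC \<alpha> = infsum (f \<alpha>) idxUV" for \<alpha>
    unfolding coefC_def
  proof (subst infsum_cmult_right'[symmetric], rule infsum_cong)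
    fix z assume "z \<in> idxUV"
    then obtain u v where uv: "z = (u,v)" "u \<noteq> 0" "v \<noteq> 0" by (auto simp: idxUV_def)
    show "4 powr \<alpha> * (case z of (u, v) \<Rightarrow> (real_of_int (u - v))\<^sup>2 * (acoup \<alpha> u)\<^sup>2 * (acoup \<alpha> v)\<^sup>2) = f \<alpha> z"
      by (simp only: uv prod.case f_def m_def C_rewrite[OF uv(2,3)])
  qed
  have m1: "1 \<le> m u v" if "u \<noteq> 0" "v \<noteq> 0" for u v
    using mult_mono[OF sq_ge1[OF that(1)] sq_ge1[OF that(2)]] unfolding m_def by simp
  have small: "u = v" if "u \<noteq> 0" "v \<noteq> 0" "u + v \<noteq> 0" "\<not> 4 \<le> m u v" for u v
  proof -
    have "\<bar>u\<bar> < 2"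
    proof (rule ccontr)
      assume "\<not> \<bar>u\<bar> < 2"
      hence "4 \<le> (real_of_int u)\<^sup>2" using sq_ge[of 2 u] by simp
      hence "4 * 1 \<le> m u v" unfolding m_def using sq_ge1[OF that(2)] by (intro mult_mono) auto
      thus False using that by simp
    qed
    moreover have "\<bar>v\<bar> < 2"
    proof (rule ccontr)
      assume "\<not> \<bar>v\<bar> < 2"
      hence "4 \<le> (real_of_int v)\<^sup>2" using sq_ge[of 2 v] by simp
      hence "1 * 4 \<le> m u v" unfolding m_def using sq_ge1[OF that(1)] by (intro mult_mono) auto
      thus False using that by simp
    qed
    ultimately show ?thesis using that by arith
  qed
  have "((\<lambda>\<alpha>. infsum (f \<alpha>) idxUV) \<longlongrightarrow> infsum L idxUV) at_top"
  proof (rule dc_infsum[where G = "\<lambda>z. 64 * GG z"])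
    show "(\<lambda>z. 64 * GG z) summable_on idxUV" by (intro summable_on_cmult_right GG_summable)
  next
    fix z assume z: "z \<in> idxUV"
    obtain u v where uv: "z = (u,v)" "u \<noteq> 0" "v \<noteq> 0" "u + v \<noteq> 0" using z by (auto simp: idxUV_def)
    show "((\<lambda>\<alpha>. f \<alpha> z) \<longlongrightarrow> L z) at_top"
    proof (cases "4 \<le> m u v")
      case True thus ?thesis unfolding f_def L_def uv prod.case
        by (intro tendsto_mult_left lim_pow) auto
    next
      case False thus ?thesis using small[OF uv(2-4) False] unfolding f_def L_def uv by simp
    qed
  next
    show "\<forall>\<^sub>F \<alpha> in at_top. \<forall>z\<in>idxUV. \<bar>f \<alpha> z\<bar> \<le> 64 * GG z"
      using eventually_ge_at_top[of 2]
    proof eventually_elim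
      case (elim \<alpha>)
      show ?case
      proof
        fix z assume z: "z \<in> idxUV"
        obtain u v where uv: "z = (u,v)" "u \<noteq> 0" "v \<noteq> 0" "u + v \<noteq> 0" using z by (auto simp: idxUV_def)
        have G0: "0 \<le> GG z" by (simp add: GG_def gg_def)
        show "\<bar>f \<alpha> z\<bar> \<le> 64 * GG z"
        proof (cases "4 \<le> m u v")
          case False thus ?thesis using small[OF uv(2-4) False] G0 unfolding f_def uv by simp
        next
          case True
          have "\<bar>f \<alpha> z\<bar> = (real_of_int (u - v))\<^sup>2 * (4 / m u v) powr \<alpha>" by (simp add: f_def uv)
          also have "\<dots> \<le> (real_of_int (u - v))\<^sup>2 * (4 / m u v)^2"
            by (intro mult_left_mono pow_le2) (use True elim in auto)
          also have "\<dots> \<le> (4 * (real_of_int u)\<^sup>2 * (real_of_int v)\<^sup>2) * (4 / m u v)^2"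
            using tri_sq[of "real_of_int u" "real_of_int v"] uv by (intro mult_right_mono) auto
          also have "\<dots> = 64 * GG z" using uv by (simp add: GG_def gg_def m_def field_simps power2_eq_square)
          finally show ?thesis .
        qed
      qed
    qed
  qed
  moreover have "infsum L idxUV = infsum L TT"
  proof (rule infsum_cong_neutral)
    fix z assume z: "z \<in> idxUV - TT"
    obtain u v where uv: "z = (u,v)" "u \<noteq> 0" "v \<noteq> 0" "u + v \<noteq> 0" "(u,v) \<notin> TT" using z by (auto simp: idxUV_def)
    have "9 \<le> m u v"
      using box[OF uv(2-5)]
    proof
      assume "3 \<le> \<bar>u\<bar>"
      hence "9 \<le> (real_of_int u)\<^sup>2" using sq_ge[of 3 u] by simp
      hence "9 * 1 \<le> m u v" unfolding m_def using sq_ge1[OF uv(3)] by (intro mult_mono) auto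
      thus ?thesis by simp
    next
      assume "3 \<le> \<bar>v\<bar>"
      hence "9 \<le> (real_of_int v)\<^sup>2" using sq_ge[of 3 v] by simp
      hence "1 * 9 \<le> m u v" unfolding m_def using sq_ge1[OF uv(2)] by (intro mult_mono) auto
      thus ?thesis by simp
    qed
    thus "L z = 0" by (simp add: L_def uv)
  qed (auto simp: TT_def idxUV_def)
  moreover have "infsum L TT = 40" by (simp add: TT_def L_def m_def)
  ultimately show ?thesis by (simp add: eq[abs_def])
qed



lemma two_prod: fixes P R :: real assumes "1 \<le> P" "1 \<le> R" shows "P + R \<le> 2*P*R"
proof -
  have "0 \<le> (P - 1) * (R - 1)" using assms by simp
  thus ?thesis using assms by (simp add: algebra_simps)
qed

lemma recip_le: fixes a b k :: real assumes "0 < a" "0 < b" "b \<le> k * a"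
  shows "1 / a \<le> k / b"
  using assms by (simp add: field_simps)

lemma hA: fixes P Q R :: real assumes "1\<le>P" "1\<le>Q" "1\<le>R" "Q \<le> P + R" "P \<le> Q + R"
  shows "R\<^sup>2 * ((1/(R*R*P*P))\<^sup>2 + 2*(1/(R*R*P*Q))\<^sup>2 + (1/(R*R*Q*Q))\<^sup>2) \<le> 10 * (1/P\<^sup>2) * (1/Q\<^sup>2)"
proof -
  have q: "Q \<le> 2*P*R" using two_prod[of P R] assms by linarith
  have p: "P \<le> 2*Q*R" using two_prod[of Q R] assms by linarith
  have q2: "Q\<^sup>2 \<le> 4 * (R\<^sup>2 * P\<^sup>2)" using power_mono[OF q, of 2] assms by (simp add: power_mult_distrib algebra_simps)
  have p2: "P\<^sup>2 \<le> 4 * (R\<^sup>2 * Q\<^sup>2)" using power_mono[OF p, of 2] assms by (simp add: power_mult_distrib algebra_simps)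
  have h1: "R\<^sup>2 * (1/(R*R*P*P))\<^sup>2 = (1/P\<^sup>2) * (1 / (R\<^sup>2*P\<^sup>2))" using assms by (simp add: field_simps power2_eq_square)
  have h1b: "1 / (R\<^sup>2*P\<^sup>2) \<le> 4 / Q\<^sup>2" using assms q2 by (intro recip_le) auto
  have h3: "R\<^sup>2 * (1/(R*R*Q*Q))\<^sup>2 = (1/Q\<^sup>2) * (1 / (R\<^sup>2*Q\<^sup>2))" using assms by (simp add: field_simps power2_eq_square)
  have h3b: "1 / (R\<^sup>2*Q\<^sup>2) \<le> 4 / P\<^sup>2" using assms p2 by (intro recip_le) auto
  have h2: "R\<^sup>2 * (1/(R*R*P*Q))\<^sup>2 = (1/P\<^sup>2) * (1/Q\<^sup>2) * (1/R\<^sup>2)" using assms by (simp add: field_simps power2_eq_square)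
  have h2b: "1/R\<^sup>2 \<le> 1" using assms by (simp add: field_simps)
  have PQ: "0 \<le> (1/P\<^sup>2)" "0 \<le> (1/Q\<^sup>2)" by auto
  have "R\<^sup>2 * ((1/(R*R*P*P))\<^sup>2 + 2*(1/(R*R*P*Q))\<^sup>2 + (1/(R*R*Q*Q))\<^sup>2)
     = (1/P\<^sup>2) * (1 / (R\<^sup>2*P\<^sup>2)) + 2 * ((1/P\<^sup>2) * (1/Q\<^sup>2) * (1/R\<^sup>2)) + (1/Q\<^sup>2) * (1 / (R\<^sup>2*Q\<^sup>2))"
    using h1 h2 h3 by (simp add: algebra_simps)
  also have "\<dots> \<le> (1/P\<^sup>2) * (4/Q\<^sup>2) + 2 * ((1/P\<^sup>2) * (1/Q\<^sup>2) * 1) + (1/Q\<^sup>2) * (4/P\<^sup>2)"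
    using h1b h2b h3b PQ by (intro add_mono mult_left_mono mult_mono) auto
  also have "\<dots> = 10 * (1/P\<^sup>2) * (1/Q\<^sup>2)" by (simp add: field_simps)
  finally show ?thesis .
qed

lemma hB: fixes P Q R D :: real assumes "1\<le>P" "1\<le>Q" "1\<le>R" "Q \<le> P + R" "P \<le> Q + R" "0 \<le> D" "D \<le> (P + Q) * R"
  shows "D * ((2/(P*P*Q*R))\<^sup>2 + (2/(P*Q*Q*R))\<^sup>2) \<le> 24 * (1/P\<^sup>2) * (1/Q\<^sup>2)"
proof -
  have q: "Q \<le> 2*P*R" using two_prod[of P R] assms by linarith
  have p: "P \<le> 2*Q*R" using two_prod[of Q R] assms by linarith
  have "P \<le> P * R" "Q \<le> Q * R" using assms by (simp_all add: prod_ge)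
  hence d1: "D \<le> 3 * (P\<^sup>2 * R\<^sup>2)" "D \<le> 3 * (Q\<^sup>2 * R\<^sup>2)"
  proof -
    have "P*R \<le> P*R*P" "Q*R \<le> Q*R*Q" using assms by (simp_all add: prod_ge)
    moreover have "D \<le> 3*P*R*R" "D \<le> 3*Q*R*R"
    proof -
      have "P \<le> P*R" "Q \<le> Q*R" using assms by (simp_all add: prod_ge)
      hence "P+Q \<le> 3*P*R" "P+Q \<le> 3*Q*R" using p q by linarith+
      hence "(P+Q)*R \<le> (3*P*R)*R" "(P+Q)*R \<le> (3*Q*R)*R" using assms by (simp_all add: mult_right_mono)
      thus "D \<le> 3*P*R*R" "D \<le> 3*Q*R*R" using assms by (simp_all add: algebra_simps)
    qed
    moreover have "3*P*R*R \<le> 3 * (P\<^sup>2 * R\<^sup>2)" "3*Q*R*R \<le> 3 * (Q\<^sup>2 * R\<^sup>2)"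
      using assms mult_right_mono[OF \<open>P*R \<le> P*R*P\<close>, of R] mult_right_mono[OF \<open>Q*R \<le> Q*R*Q\<close>, of R]
      by (simp_all add: power2_eq_square algebra_simps)
    ultimately show "D \<le> 3 * (P\<^sup>2 * R\<^sup>2)" "D \<le> 3 * (Q\<^sup>2 * R\<^sup>2)" by linarith+
  qed
  have e1: "D * (2/(P*P*Q*R))\<^sup>2 = (1/P\<^sup>2) * (1/Q\<^sup>2) * (4 * (D / (P\<^sup>2 * R\<^sup>2)))"
    using assms by (simp add: field_simps power2_eq_square)
  have e2: "D * (2/(P*Q*Q*R))\<^sup>2 = (1/P\<^sup>2) * (1/Q\<^sup>2) * (4 * (D / (Q\<^sup>2 * R\<^sup>2)))"
    using assms by (simp add: field_simps power2_eq_square)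
  have "D / (P\<^sup>2 * R\<^sup>2) \<le> 3" "D / (Q\<^sup>2 * R\<^sup>2) \<le> 3" using d1 assms by (simp_all add: divide_le_eq)
  hence "(1/P\<^sup>2) * (1/Q\<^sup>2) * (4 * (D / (P\<^sup>2 * R\<^sup>2))) \<le> (1/P\<^sup>2) * (1/Q\<^sup>2) * 12"
        "(1/P\<^sup>2) * (1/Q\<^sup>2) * (4 * (D / (Q\<^sup>2 * R\<^sup>2))) \<le> (1/P\<^sup>2) * (1/Q\<^sup>2) * 12"
    by (intro mult_left_mono; simp)+
  thus ?thesis using e1 e2 by (simp add: algebra_simps)
qed



lemma pw4_real: fixes a b d e c :: real assumes "0 \<le> c" "0 < a" "0 < b" "0 < d" "0 < e"
  shows "(c/(a*b*d*e)) powr \<alpha> = c powr \<alpha> * (1/a) powr \<alpha> * (1/b) powr \<alpha> * (1/d) powr \<alpha> * (1/e) powr \<alpha>"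
proof -
  have "c/(a*b*d*e) = c*(1/a)*(1/b)*(1/d)*(1/e)" by simp
  also have "(c*(1/a)*(1/b)*(1/d)*(1/e)) powr \<alpha> = (c*(1/a)*(1/b)*(1/d)) powr \<alpha> * (1/e) powr \<alpha>"
    by (rule powr_mult; use assms in simp)
  also have "(c*(1/a)*(1/b)*(1/d)) powr \<alpha> = (c*(1/a)*(1/b)) powr \<alpha> * (1/d) powr \<alpha>"
    by (rule powr_mult; use assms in simp)
  also have "(c*(1/a)*(1/b)) powr \<alpha> = (c*(1/a)) powr \<alpha> * (1/b) powr \<alpha>"
    by (rule powr_mult; use assms in simp)
  also have "(c*(1/a)) powr \<alpha> = c powr \<alpha> * (1/a) powr \<alpha>"
    by (rule powr_mult; use assms in simp)
  finally show ?thesis by simp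
qed

lemma pw4: fixes x y z t :: int and c :: real
  assumes "0 \<le> c" "x \<noteq> 0" "y \<noteq> 0" "z \<noteq> 0" "t \<noteq> 0"
  shows "(c / real_of_int (\<bar>x\<bar>*\<bar>y\<bar>*\<bar>z\<bar>*\<bar>t\<bar>)) powr \<alpha> = c powr \<alpha> * acoup \<alpha> x * acoup \<alpha> y * acoup \<alpha> z * acoup \<alpha> t"
  using pw4_real[of c "\<bar>real_of_int x\<bar>" "\<bar>real_of_int y\<bar>" "\<bar>real_of_int z\<bar>" "\<bar>real_of_int t\<bar>" \<alpha>] assms
  by (simp add: acoup_eq)

lemma prod_ge1: fixes x y z t :: int
  assumes "x \<noteq> 0" "y \<noteq> 0" "z \<noteq> 0" "t \<noteq> 0"
  shows "1 \<le> real_of_int (\<bar>x\<bar>*\<bar>y\<bar>*\<bar>z\<bar>*\<bar>t\<bar>)"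
proof -
  have "1*1*1*1 \<le> \<bar>x\<bar>*\<bar>y\<bar>*\<bar>z\<bar>*\<bar>t\<bar>" using assms
    by (intro mult_mono) (auto simp: mult_nonneg_nonneg)
  thus ?thesis by linarith
qed

lemma prod_eq1: fixes x y z t :: int
  assumes "\<bar>x\<bar>*\<bar>y\<bar>*\<bar>z\<bar>*\<bar>t\<bar> = 1"
  shows "\<bar>x\<bar> = 1 \<and> \<bar>y\<bar> = 1 \<and> \<bar>z\<bar> = 1 \<and> \<bar>t\<bar> = 1"
  using assms by (auto simp: zmult_eq_1_iff)

lemma A_lim: "(coefA \<longlongrightarrow> 4) at_top"
proof -
  define m1 where "m1 u v = real_of_int (\<bar>u+v\<bar>*\<bar>u+v\<bar>*\<bar>u\<bar>*\<bar>u\<bar>)" for u v :: int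
  define m2 where "m2 u v = real_of_int (\<bar>u+v\<bar>*\<bar>u+v\<bar>*\<bar>u\<bar>*\<bar>v\<bar>)" for u v :: int
  define m3 where "m3 u v = real_of_int (\<bar>u+v\<bar>*\<bar>u+v\<bar>*\<bar>v\<bar>*\<bar>v\<bar>)" for u v :: int
  define f where "f \<alpha> z = (case z of (u,v) \<Rightarrow> (real_of_int (u + v))\<^sup>2 *
     ((1 / m1 u v) powr \<alpha> - 2 * (1 / m2 u v) powr \<alpha> + (1 / m3 u v) powr \<alpha>))" for \<alpha> z
  define L where "L z = (case z of (u,v) \<Rightarrow> (real_of_int (u + v))\<^sup>2 *
     ((if m1 u v = 1 then 1 else 0) - 2 * (if m2 u v = 1 then 1 else 0) + (if m3 u v = 1 then 1 else 0)))" for z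
  have eq: "coefA \<alpha> = infsum (f \<alpha>) idxUV" for \<alpha>
    unfolding coefA_def
  proof (rule infsum_cong)
    fix z assume "z \<in> idxUV"
    then obtain u v where uv: "z = (u,v)" "u \<noteq> 0" "v \<noteq> 0" "u + v \<noteq> 0" by (auto simp: idxUV_def)
    show "(case z of (u, v) \<Rightarrow> (real_of_int (u + v))\<^sup>2 * (acoup \<alpha> (u + v))\<^sup>2 * (acoup \<alpha> u - acoup \<alpha> v)\<^sup>2) = f \<alpha> z"
      unfolding uv f_def m1_def m2_def m3_def prod.case
      using pw4[of 1 "u+v" "u+v" u u \<alpha>] pw4[of 1 "u+v" "u+v" u v \<alpha>] pw4[of 1 "u+v" "u+v" v v \<alpha>] uv
      by (simp add: power2_eq_square algebra_simps)
  qed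
  have "((\<lambda>\<alpha>. infsum (f \<alpha>) idxUV) \<longlongrightarrow> infsum L idxUV) at_top"
  proof (rule dc_infsum[where G = "\<lambda>z. 10 * GG z"])
    show "(\<lambda>z. 10 * GG z) summable_on idxUV" by (intro summable_on_cmult_right GG_summable)
  next
    fix z assume z: "z \<in> idxUV"
    obtain u v where uv: "z = (u,v)" "u \<noteq> 0" "v \<noteq> 0" "u + v \<noteq> 0" using z by (auto simp: idxUV_def)
    have l1: "((\<lambda>\<alpha>. (1 / m1 u v) powr \<alpha>) \<longlongrightarrow> (if m1 u v = 1 then 1 else 0)) at_top"
      unfolding m1_def using prod_ge1[of "u+v" "u+v" u u] uv by (intro lim_pow) auto
    have l2: "((\<lambda>\<alpha>. (1 / m2 u v) powr \<alpha>) \<longlongrightarrow> (if m2 u v = 1 then 1 else 0)) at_top"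
      unfolding m2_def using prod_ge1[of "u+v" "u+v" u v] uv by (intro lim_pow) auto
    have l3: "((\<lambda>\<alpha>. (1 / m3 u v) powr \<alpha>) \<longlongrightarrow> (if m3 u v = 1 then 1 else 0)) at_top"
      unfolding m3_def using prod_ge1[of "u+v" "u+v" v v] uv by (intro lim_pow) auto
    show "((\<lambda>\<alpha>. f \<alpha> z) \<longlongrightarrow> L z) at_top"
      unfolding f_def L_def uv prod.case
      by (intro tendsto_mult_left tendsto_add tendsto_diff l1 l2 l3)
  next
    show "\<forall>\<^sub>F \<alpha> in at_top. \<forall>z\<in>idxUV. \<bar>f \<alpha> z\<bar> \<le> 10 * GG z"
      using eventually_ge_at_top[of 2]
    proof eventually_elim
      case (elim \<alpha>)
      show ?case
      proof
        fix z assume z: "z \<in> idxUV"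
        obtain u v where uv: "z = (u,v)" "u \<noteq> 0" "v \<noteq> 0" "u + v \<noteq> 0" using z by (auto simp: idxUV_def)
        define P where "P = \<bar>real_of_int u\<bar>"
        define Q where "Q = \<bar>real_of_int v\<bar>"
        define R where "R = \<bar>real_of_int (u+v)\<bar>"
        have PQR: "1 \<le> P" "1 \<le> Q" "1 \<le> R" "Q \<le> P + R" "P \<le> Q + R" using uv unfolding P_def Q_def R_def by linarith+
        have mm: "m1 u v = R*R*P*P" "m2 u v = R*R*P*Q" "m3 u v = R*R*Q*Q"
          unfolding m1_def m2_def m3_def P_def Q_def R_def by simp_all
        have b: "(1 / x) powr \<alpha> \<le> (1 / x)^2" "0 \<le> (1 / x) powr \<alpha>"
          if "1 \<le> x" for x :: real using pow_le2[of 1 x \<alpha>] that elim by auto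
        have "1*1*1*1 \<le> R*R*P*P" "1*1*1*1 \<le> R*R*P*Q" "1*1*1*1 \<le> R*R*Q*Q"
          using PQR by (intro mult_mono; simp)+
        hence g1: "1 \<le> m1 u v" "1 \<le> m2 u v" "1 \<le> m3 u v" unfolding mm by simp_all
        have "\<bar>f \<alpha> z\<bar> \<le> (real_of_int (u + v))\<^sup>2 *
            ((1 / m1 u v) powr \<alpha> + 2 * (1 / m2 u v) powr \<alpha> + (1 / m3 u v) powr \<alpha>)"
        proof -
          have "\<bar>(1 / m1 u v) powr \<alpha> - 2 * (1 / m2 u v) powr \<alpha> + (1 / m3 u v) powr \<alpha>\<bar>
              \<le> (1 / m1 u v) powr \<alpha> + 2 * (1 / m2 u v) powr \<alpha> + (1 / m3 u v) powr \<alpha>"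
            using b(2)[OF g1(1)] b(2)[OF g1(2)] b(2)[OF g1(3)] by linarith
          thus ?thesis unfolding f_def uv prod.case abs_mult by (simp add: mult_left_mono)
        qed
        also have "\<dots> \<le> R\<^sup>2 * ((1/(R*R*P*P))\<^sup>2 + 2*(1/(R*R*P*Q))\<^sup>2 + (1/(R*R*Q*Q))\<^sup>2)"
          using b(1)[OF g1(1)] b(1)[OF g1(2)] b(1)[OF g1(3)] unfolding mm R_def power2_abs
          by (intro mult_left_mono add_mono) auto
        also have "\<dots> \<le> 10 * (1/P\<^sup>2) * (1/Q\<^sup>2)" by (rule hA[OF PQR])
        also have "\<dots> = 10 * GG z" by (simp add: GG_def gg_def uv P_def Q_def)
        finally show "\<bar>f \<alpha> z\<bar> \<le> 10 * GG z" .
      qed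
    qed
  qed
  moreover have "infsum L idxUV = infsum L TT"
  proof (rule infsum_cong_neutral)
    fix z assume z: "z \<in> idxUV - TT"
    obtain u v where uv: "z = (u,v)" "u \<noteq> 0" "v \<noteq> 0" "u + v \<noteq> 0" "(u,v) \<notin> TT" using z by (auto simp: idxUV_def)
    have big: "3 \<le> \<bar>u\<bar> \<or> 3 \<le> \<bar>v\<bar>" by (rule box[OF uv(2-5)])
    have "m1 u v \<noteq> 1"
    proof
      assume "m1 u v = 1"
      hence "\<bar>u+v\<bar>*\<bar>u+v\<bar>*\<bar>u\<bar>*\<bar>u\<bar> = 1" unfolding m1_def by linarith
      from prod_eq1[OF this] show False using big by arith
    qed
    moreover have "m2 u v \<noteq> 1"
    proof
      assume "m2 u v = 1"
      hence "\<bar>u+v\<bar>*\<bar>u+v\<bar>*\<bar>u\<bar>*\<bar>v\<bar> = 1" unfolding m2_def by linarith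
      from prod_eq1[OF this] show False using big by arith
    qed
    moreover have "m3 u v \<noteq> 1"
    proof
      assume "m3 u v = 1"
      hence "\<bar>u+v\<bar>*\<bar>u+v\<bar>*\<bar>v\<bar>*\<bar>v\<bar> = 1" unfolding m3_def by linarith
      from prod_eq1[OF this] show False using big by arith
    qed
    ultimately show "L z = 0" by (simp add: L_def uv)
  qed (auto simp: TT_def idxUV_def)
  moreover have "infsum L TT = 4" by (simp add: TT_def L_def m1_def m2_def m3_def)
  ultimately show ?thesis by (simp add: eq[abs_def])
qed



lemma B_lim: "((\<lambda>\<alpha>. 2 powr \<alpha> * coefB \<alpha>) \<longlongrightarrow> -12) at_top"
proof -
  define m1 where "m1 u v = real_of_int (\<bar>u\<bar>*\<bar>u\<bar>*\<bar>v\<bar>*\<bar>u+v\<bar>)" for u v :: int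
  define m2 where "m2 u v = real_of_int (\<bar>u\<bar>*\<bar>v\<bar>*\<bar>v\<bar>*\<bar>u+v\<bar>)" for u v :: int
  define f where "f \<alpha> z = (case z of (u,v) \<Rightarrow> (real_of_int u ^ 2 - real_of_int v ^ 2) *
     ((2 / m1 u v) powr \<alpha> - (2 / m2 u v) powr \<alpha>))" for \<alpha> z
  define L where "L z = (case z of (u,v) \<Rightarrow> (real_of_int u ^ 2 - real_of_int v ^ 2) *
     ((if m1 u v = 2 then 1 else 0) - (if m2 u v = 2 then 1 else 0)))" for z
  have eq: "2 powr \<alpha> * coefB \<alpha> = infsum (f \<alpha>) idxUV" for \<alpha>
    unfolding coefB_def
  proof (subst infsum_cmult_right'[symmetric], rule infsum_cong)
    fix z assume "z \<in> idxUV"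
    then obtain u v where uv: "z = (u,v)" "u \<noteq> 0" "v \<noteq> 0" "u + v \<noteq> 0" by (auto simp: idxUV_def)
    show "2 powr \<alpha> * (case z of (u, v) \<Rightarrow> (real_of_int u ^ 2 - real_of_int v ^ 2) * acoup \<alpha> u * acoup \<alpha> v * acoup \<alpha> (u + v)
       * (acoup \<alpha> u - acoup \<alpha> v)) = f \<alpha> z"
      unfolding uv f_def m1_def m2_def prod.case
      using pw4[of 2 u u v "u+v" \<alpha>] pw4[of 2 u v v "u+v" \<alpha>] uv
      by (simp add: algebra_simps)
  qed
  have ge2: "2 \<le> m1 u v" "2 \<le> m2 u v" if uv: "u \<noteq> 0" "v \<noteq> 0" "u + v \<noteq> 0" for u v
  proof -
    have a: "1 \<le> m1 u v" "1 \<le> m2 u v" unfolding m1_def m2_def using prod_ge1[of u u v "u+v"] prod_ge1[of u v v "u+v"] uv by simp_all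
    have "m1 u v \<noteq> 1"
    proof
      assume "m1 u v = 1"
      hence "\<bar>u\<bar>*\<bar>u\<bar>*\<bar>v\<bar>*\<bar>u+v\<bar> = 1" unfolding m1_def by linarith
      from prod_eq1[OF this] show False using uv by arith
    qed
    moreover have "m2 u v \<noteq> 1"
    proof
      assume "m2 u v = 1"
      hence "\<bar>u\<bar>*\<bar>v\<bar>*\<bar>v\<bar>*\<bar>u+v\<bar> = 1" unfolding m2_def by linarith
      from prod_eq1[OF this] show False using uv by arith
    qed
    moreover have "m1 u v \<in> \<int>" "m2 u v \<in> \<int>" unfolding m1_def m2_def by auto
    ultimately show "2 \<le> m1 u v" "2 \<le> m2 u v" using a
      by (auto elim!: Ints_cases)
  qed
  have "((\<lambda>\<alpha>. infsum (f \<alpha>) idxUV) \<longlongrightarrow> infsum L idxUV) at_top"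
  proof (rule dc_infsum[where G = "\<lambda>z. 24 * GG z"])
    show "(\<lambda>z. 24 * GG z) summable_on idxUV" by (intro summable_on_cmult_right GG_summable)
  next
    fix z assume z: "z \<in> idxUV"
    obtain u v where uv: "z = (u,v)" "u \<noteq> 0" "v \<noteq> 0" "u + v \<noteq> 0" using z by (auto simp: idxUV_def)
    have l1: "((\<lambda>\<alpha>. (2 / m1 u v) powr \<alpha>) \<longlongrightarrow> (if m1 u v = 2 then 1 else 0)) at_top"
      using ge2[OF uv(2-4)] by (intro lim_pow) auto
    have l2: "((\<lambda>\<alpha>. (2 / m2 u v) powr \<alpha>) \<longlongrightarrow> (if m2 u v = 2 then 1 else 0)) at_top"
      using ge2[OF uv(2-4)] by (intro lim_pow) auto
    show "((\<lambda>\<alpha>. f \<alpha> z) \<longlongrightarrow> L z) at_top"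
      unfolding f_def L_def uv prod.case
      by (intro tendsto_mult_left tendsto_diff l1 l2)
  next
    show "\<forall>\<^sub>F \<alpha> in at_top. \<forall>z\<in>idxUV. \<bar>f \<alpha> z\<bar> \<le> 24 * GG z"
      using eventually_ge_at_top[of 2]
    proof eventually_elim
      case (elim \<alpha>)
      show ?case
      proof
        fix z assume z: "z \<in> idxUV"
        obtain u v where uv: "z = (u,v)" "u \<noteq> 0" "v \<noteq> 0" "u + v \<noteq> 0" using z by (auto simp: idxUV_def)
        define P where "P = \<bar>real_of_int u\<bar>"
        define Q where "Q = \<bar>real_of_int v\<bar>"
        define R where "R = \<bar>real_of_int (u+v)\<bar>"
        define D where "D = \<bar>real_of_int u ^ 2 - real_of_int v ^ 2\<bar>"
        have PQR: "1 \<le> P" "1 \<le> Q" "1 \<le> R" "Q \<le> P + R" "P \<le> Q + R" using uv unfolding P_def Q_def R_def by linarith+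
        have D: "0 \<le> D" "D \<le> (P + Q) * R"
        proof -
          have "real_of_int u ^ 2 - real_of_int v ^ 2 = (real_of_int u - real_of_int v) * real_of_int (u+v)"
            by (simp add: algebra_simps power2_eq_square)
          hence "D = \<bar>real_of_int u - real_of_int v\<bar> * R" unfolding D_def R_def by (simp add: abs_mult)
          moreover have "\<bar>real_of_int u - real_of_int v\<bar> \<le> P + Q" unfolding P_def Q_def by linarith
          ultimately show "D \<le> (P + Q) * R" using PQR by (simp add: mult_right_mono)
        qed (simp add: D_def)
        have mm: "m1 u v = P*P*Q*R" "m2 u v = P*Q*Q*R"
          unfolding m1_def m2_def P_def Q_def R_def by simp_all
        have b: "(2 / x) powr \<alpha> \<le> (2 / x)^2" "0 \<le> (2 / x) powr \<alpha>"
          if "2 \<le> x" for x :: real using pow_le2[of 2 x \<alpha>] that elim by auto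
        note g = ge2[OF uv(2-4)]
        have "\<bar>f \<alpha> z\<bar> \<le> D * ((2 / m1 u v) powr \<alpha> + (2 / m2 u v) powr \<alpha>)"
        proof -
          have "\<bar>(2 / m1 u v) powr \<alpha> - (2 / m2 u v) powr \<alpha>\<bar>
              \<le> (2 / m1 u v) powr \<alpha> + (2 / m2 u v) powr \<alpha>"
            using b(2)[OF g(1)] b(2)[OF g(2)] by linarith
          thus ?thesis unfolding f_def uv prod.case abs_mult D_def by (simp add: mult_left_mono)
        qed
        also have "\<dots> \<le> D * ((2/(P*P*Q*R))\<^sup>2 + (2/(P*Q*Q*R))\<^sup>2)"
          using b(1)[OF g(1)] b(1)[OF g(2)] D unfolding mm
          by (intro mult_left_mono add_mono) auto
        also have "\<dots> \<le> 24 * (1/P\<^sup>2) * (1/Q\<^sup>2)" by (rule hB[OF PQR D])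
        also have "\<dots> = 24 * GG z" by (simp add: GG_def gg_def uv P_def Q_def)
        finally show "\<bar>f \<alpha> z\<bar> \<le> 24 * GG z" .
      qed
    qed
  qed
  moreover have "infsum L idxUV = infsum L TT"
  proof (rule infsum_cong_neutral)
    fix z assume z: "z \<in> idxUV - TT"
    obtain u v where uv: "z = (u,v)" "u \<noteq> 0" "v \<noteq> 0" "u + v \<noteq> 0" "(u,v) \<notin> TT" using z by (auto simp: idxUV_def)
    have big: "3 \<le> \<bar>u\<bar> \<or> 3 \<le> \<bar>v\<bar>" by (rule box[OF uv(2-5)])
    have pos: "1 \<le> \<bar>u\<bar>" "1 \<le> \<bar>v\<bar>" "1 \<le> \<bar>u+v\<bar>" using uv by auto
    have "3 \<le> \<bar>u\<bar>*\<bar>u\<bar>*\<bar>v\<bar>*\<bar>u+v\<bar>"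
      using big
    proof
      assume "3 \<le> \<bar>u\<bar>"
      hence "3*1*1*1 \<le> \<bar>u\<bar>*\<bar>u\<bar>*\<bar>v\<bar>*\<bar>u+v\<bar>" using pos by (intro mult_mono) auto
      thus ?thesis by simp
    next
      assume "3 \<le> \<bar>v\<bar>"
      hence "1*1*3*1 \<le> \<bar>u\<bar>*\<bar>u\<bar>*\<bar>v\<bar>*\<bar>u+v\<bar>" using pos by (intro mult_mono) auto
      thus ?thesis by simp
    qed
    hence "m1 u v \<noteq> 2" unfolding m1_def by linarith
    moreover have "3 \<le> \<bar>u\<bar>*\<bar>v\<bar>*\<bar>v\<bar>*\<bar>u+v\<bar>"
      using big
    proof
      assume "3 \<le> \<bar>u\<bar>"
      hence "3*1*1*1 \<le> \<bar>u\<bar>*\<bar>v\<bar>*\<bar>v\<bar>*\<bar>u+v\<bar>" using pos by (intro mult_mono) auto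
      thus ?thesis by simp
    next
      assume "3 \<le> \<bar>v\<bar>"
      hence "1*3*1*1 \<le> \<bar>u\<bar>*\<bar>v\<bar>*\<bar>v\<bar>*\<bar>u+v\<bar>" using pos by (intro mult_mono) auto
      thus ?thesis by simp
    qed
    hence "m2 u v \<noteq> 2" unfolding m2_def by linarith
    ultimately show "L z = 0" by (simp add: L_def uv)
  qed (auto simp: TT_def idxUV_def)
  moreover have "infsum L TT = -12" by (simp add: TT_def L_def m1_def m2_def)
  ultimately show ?thesis by (simp add: eq[abs_def])
qed



lemma four_powr: "(4::real) powr \<alpha> = (2 powr \<alpha>)^2"
proof -
  have "(4::real) powr \<alpha> = (2*2) powr \<alpha>" by simp
  also have "\<dots> = 2 powr \<alpha> * 2 powr \<alpha>" by (rule powr_mult; simp)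
  finally show ?thesis by (simp add: power2_eq_square)
qed

lemma scaled:
  assumes "((\<lambda>\<alpha>. 2 powr \<alpha> * D \<alpha>) \<longlongrightarrow> x) at_top"
  shows "((\<lambda>\<alpha>. 2 powr \<alpha> * tau_eff_inv \<alpha> (D \<alpha>)) \<longlongrightarrow> (1/2) * sqrt ((4*x\<^sup>2 + 2*(-12)*x + 40)/2)) at_top"
proof -
  have eqn: "2 powr \<alpha> * tau_eff_inv \<alpha> (D \<alpha>) = (1/2) * sqrt ((coefA \<alpha> * (2 powr \<alpha> * D \<alpha>)\<^sup>2
      + 2 * (2 powr \<alpha> * coefB \<alpha>) * (2 powr \<alpha> * D \<alpha>) + 4 powr \<alpha> * coefC \<alpha>) / normS \<alpha>)" for \<alpha>
  proof -
    have s: "2 powr \<alpha> = sqrt (4 powr \<alpha>)" by (simp add: four_powr)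
    have "2 powr \<alpha> * tau_eff_inv \<alpha> (D \<alpha>) = (1/2) * (sqrt (4 powr \<alpha>) * sqrt ((coefA \<alpha> * (D \<alpha>)\<^sup>2 + 2 * coefB \<alpha> * D \<alpha> + coefC \<alpha>) / normS \<alpha>))"
      unfolding tau_eff_inv_def s by simp
    also have "\<dots> = (1/2) * sqrt (4 powr \<alpha> * ((coefA \<alpha> * (D \<alpha>)\<^sup>2 + 2 * coefB \<alpha> * D \<alpha> + coefC \<alpha>) / normS \<alpha>))"
      by (simp only: real_sqrt_mult)
    also have "4 powr \<alpha> * ((coefA \<alpha> * (D \<alpha>)\<^sup>2 + 2 * coefB \<alpha> * D \<alpha> + coefC \<alpha>) / normS \<alpha>)
       = (coefA \<alpha> * (2 powr \<alpha> * D \<alpha>)\<^sup>2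
      + 2 * (2 powr \<alpha> * coefB \<alpha>) * (2 powr \<alpha> * D \<alpha>) + 4 powr \<alpha> * coefC \<alpha>) / normS \<alpha>"
      by (simp add: four_powr power2_eq_square algebra_simps add_divide_distrib)
    finally show ?thesis .
  qed
  have "((\<lambda>\<alpha>. (1/2) * sqrt ((coefA \<alpha> * (2 powr \<alpha> * D \<alpha>)\<^sup>2
      + 2 * (2 powr \<alpha> * coefB \<alpha>) * (2 powr \<alpha> * D \<alpha>) + 4 powr \<alpha> * coefC \<alpha>) / normS \<alpha>))
     \<longlongrightarrow> (1/2) * sqrt ((4*x\<^sup>2 + 2*(-12)*x + 40)/2)) at_top"
    by (intro tendsto_mult_left tendsto_real_sqrt tendsto_divide tendsto_add tendsto_mult
        tendsto_power A_lim B_lim C_lim normS_lim assms tendsto_const) simp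
  thus ?thesis by (simp only: eqn)
qed

lemma exp1_gt2: "2 < exp (1::real)"
proof -
  have "3/2 \<le> exp (1/2::real)" using exp_ge_add_one_self[of "1/2::real"] by simp
  hence "(3/2)*(3/2) \<le> exp (1/2::real) * exp (1/2)" by (intro mult_mono) auto
  also have "\<dots> = exp 1" by (simp flip: exp_add)
  finally show ?thesis by simp
qed

theorem mainTheorem4:
  fixes c k :: real and \<Delta> :: "real \<Rightarrow> real"
  assumes hc: "c > 1"
    and hlim: "((\<lambda>\<alpha>. c powr \<alpha> * \<Delta> \<alpha>) \<longlongrightarrow> k) at_top"
  shows "(c < 2 \<and> k \<noteq> 0 \<longrightarrow>
           ((\<lambda>\<alpha>. tau_eff_inv \<alpha> (\<Delta> \<alpha>) / (\<bar>\<Delta> \<alpha>\<bar> / sqrt 2)) \<longlongrightarrow> 1) at_top)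
       \<and> (c = 2 \<longrightarrow>
           ((\<lambda>\<alpha>. 2 powr \<alpha> * tau_eff_inv \<alpha> (\<Delta> \<alpha>)) \<longlongrightarrow> sqrt (((k - 3)\<^sup>2 + 1) / 2)) at_top)
       \<and> (c > 2 \<longrightarrow>
           ((\<lambda>\<alpha>. 2 powr \<alpha> * tau_eff_inv \<alpha> (\<Delta> \<alpha>)) \<longlongrightarrow> sqrt 5) at_top)
       \<and> ((\<lambda>\<alpha>. 2 powr \<alpha> * tau_eff_inv \<alpha> (- coefB \<alpha> / coefA \<alpha>)) \<longlongrightarrow> 1 / sqrt 2) at_top
       \<and> ((\<lambda>\<alpha>. 2 powr \<alpha> * tau_eff_inv \<alpha> (exp (2 - \<alpha>))) \<longlongrightarrow> sqrt 5) at_top"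
proof (intro conjI impI)
  have sq20: "(1/2) * sqrt 20 = sqrt 5"
  proof -
    have "sqrt (20::real) = sqrt (2^2 * 5)" by simp
    also have "\<dots> = 2 * sqrt 5" by (simp only: real_sqrt_mult real_sqrt_abs abs_numeral)
    finally show ?thesis by simp
  qed
  assume c2: "c = 2"
  have "((\<lambda>\<alpha>. 2 powr \<alpha> * tau_eff_inv \<alpha> (\<Delta> \<alpha>)) \<longlongrightarrow> (1/2) * sqrt ((4*k\<^sup>2 + 2*(-12)*k + 40)/2)) at_top"
    by (rule scaled) (use hlim c2 in simp)
  moreover have "(1/2) * sqrt ((4*k\<^sup>2 + 2*(-12)*k + 40)/2) = sqrt (((k - 3)\<^sup>2 + 1) / 2)"
  proof -
    have h: "(4*k\<^sup>2 + 2*(-12)*k + 40)/2 = 2^2 * (((k - 3)\<^sup>2 + 1) / 2)" by (simp add: power2_eq_square algebra_simps)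
    have "(1/2) * sqrt ((4*k\<^sup>2 + 2*(-12)*k + 40)/2) = (1/2) * sqrt (2^2 * (((k - 3)\<^sup>2 + 1) / 2))"
      by (simp only: h)
    also have "\<dots> = (1/2) * (2 * sqrt (((k - 3)\<^sup>2 + 1) / 2))"
      by (simp only: real_sqrt_mult real_sqrt_abs abs_numeral)
    finally show ?thesis by simp
  qed
  ultimately show "((\<lambda>\<alpha>. 2 powr \<alpha> * tau_eff_inv \<alpha> (\<Delta> \<alpha>)) \<longlongrightarrow> sqrt (((k - 3)\<^sup>2 + 1) / 2)) at_top" by simp
next
  have sq20: "(1/2) * sqrt 20 = sqrt 5"
  proof -
    have "sqrt (20::real) = sqrt (2^2 * 5)" by simp
    also have "\<dots> = 2 * sqrt 5" by (simp only: real_sqrt_mult real_sqrt_abs abs_numeral)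
    finally show ?thesis by simp
  qed
  assume c2: "c > 2"
  have fe: "(\<lambda>\<alpha>. 2 powr \<alpha> * \<Delta> \<alpha>) = (\<lambda>\<alpha>. (2/c) powr \<alpha> * (c powr \<alpha> * \<Delta> \<alpha>))"
    using hc by (auto simp: powr_divide fun_eq_iff)
  have "((\<lambda>\<alpha>. (2/c) powr \<alpha> * (c powr \<alpha> * \<Delta> \<alpha>)) \<longlongrightarrow> 0 * k) at_top"
    using lim_pow[of 2 c] c2 by (intro tendsto_mult hlim) auto
  hence "((\<lambda>\<alpha>. 2 powr \<alpha> * \<Delta> \<alpha>) \<longlongrightarrow> 0) at_top" unfolding fe by simp
  from scaled[OF this] sq20
  show "((\<lambda>\<alpha>. 2 powr \<alpha> * tau_eff_inv \<alpha> (\<Delta> \<alpha>)) \<longlongrightarrow> sqrt 5) at_top" by simp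
next
  have "((\<lambda>\<alpha>. - (2 powr \<alpha> * coefB \<alpha>) / coefA \<alpha>) \<longlongrightarrow> - (-12) / 4) at_top"
    by (intro tendsto_divide tendsto_minus B_lim A_lim) auto
  hence h3: "((\<lambda>\<alpha>. 2 powr \<alpha> * (- coefB \<alpha> / coefA \<alpha>)) \<longlongrightarrow> 3) at_top" by simp
  have val: "(1/2) * sqrt ((4*(3::real)\<^sup>2 + 2*(-12)*3 + 40)/2) = 1 / sqrt (2::real)"
  proof -
    have "(4*(3::real)\<^sup>2 + 2*(-12)*3 + 40)/2 = 2" by (simp add: power2_eq_square)
    moreover have "(1/2) * sqrt 2 = 1 / sqrt (2::real)" by (simp add: field_simps)
    ultimately show ?thesis by simp
  qed
  show "((\<lambda>\<alpha>. 2 powr \<alpha> * tau_eff_inv \<alpha> (- coefB \<alpha> / coefA \<alpha>)) \<longlongrightarrow> 1 / sqrt 2) at_top"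
    using scaled[OF h3] unfolding val .
next
  have sq20: "(1/2) * sqrt 20 = sqrt 5"
  proof -
    have "sqrt (20::real) = sqrt (2^2 * 5)" by simp
    also have "\<dots> = 2 * sqrt 5" by (simp only: real_sqrt_mult real_sqrt_abs abs_numeral)
    finally show ?thesis by simp
  qed
  have e: "2 powr \<alpha> * exp (2 - \<alpha>) = exp 2 * (2 / exp 1) powr \<alpha>" for \<alpha> :: real
  proof -
    have "exp 1 powr \<alpha> = exp \<alpha>" using exp_powr_real[of 1 \<alpha>] by simp
    thus ?thesis by (simp add: powr_divide exp_diff)
  qed
  have "((\<lambda>\<alpha>::real. exp 2 * (2 / exp 1) powr \<alpha>) \<longlongrightarrow> exp 2 * 0) at_top"
    using lim_pow[of 2 "exp 1"] exp1_gt2 by (intro tendsto_mult_left) auto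
  hence "((\<lambda>\<alpha>::real. 2 powr \<alpha> * exp (2 - \<alpha>)) \<longlongrightarrow> 0) at_top" by (simp add: e)
  from scaled[OF this] sq20
  show "((\<lambda>\<alpha>. 2 powr \<alpha> * tau_eff_inv \<alpha> (exp (2 - \<alpha>))) \<longlongrightarrow> sqrt 5) at_top" by simp
next
  assume ck: "c < 2 \<and> k \<noteq> 0"
  define y where "y \<alpha> = 1 / (2 powr \<alpha> * \<Delta> \<alpha>)" for \<alpha>
  have y_eq: "y \<alpha> = (c/2) powr \<alpha> * (1 / (c powr \<alpha> * \<Delta> \<alpha>))" for \<alpha>
    unfolding y_def using hc by (simp add: powr_divide)
  have y0: "(y \<longlongrightarrow> 0 * (1/k)) at_top"
    unfolding y_eq[abs_def] using lim_pow[of c 2] hc ck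
    by (intro tendsto_mult tendsto_divide hlim tendsto_const) auto
  have ev: "\<forall>\<^sub>F \<alpha> in at_top. \<Delta> \<alpha> \<noteq> 0"
  proof -
    have "\<forall>\<^sub>F \<alpha> in at_top. c powr \<alpha> * \<Delta> \<alpha> \<noteq> 0"
      using tendsto_imp_eventually_ne[OF hlim, of 0] ck by blast
    thus ?thesis by (rule eventually_mono) auto
  qed
  have key: "tau_eff_inv \<alpha> (\<Delta> \<alpha>) / (\<bar>\<Delta> \<alpha>\<bar> / sqrt 2)
     = (sqrt 2 / 2) * sqrt ((coefA \<alpha> + 2 * (2 powr \<alpha> * coefB \<alpha>) * y \<alpha> + (4 powr \<alpha> * coefC \<alpha>) * (y \<alpha>)\<^sup>2) / normS \<alpha>)"
    if D: "\<Delta> \<alpha> \<noteq> 0" for \<alpha>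
  proof -
    have p: "2 powr \<alpha> \<noteq> (0::real)" by simp
    have "(coefA \<alpha> + 2 * (2 powr \<alpha> * coefB \<alpha>) * y \<alpha> + (4 powr \<alpha> * coefC \<alpha>) * (y \<alpha>)\<^sup>2)
        = (coefA \<alpha> * (\<Delta> \<alpha>)\<^sup>2 + 2 * coefB \<alpha> * \<Delta> \<alpha> + coefC \<alpha>) / (\<Delta> \<alpha>)\<^sup>2"
      unfolding y_def four_powr using D p by (simp add: field_simps power2_eq_square)
    hence "sqrt ((coefA \<alpha> + 2 * (2 powr \<alpha> * coefB \<alpha>) * y \<alpha> + (4 powr \<alpha> * coefC \<alpha>) * (y \<alpha>)\<^sup>2) / normS \<alpha>)
        = sqrt ((coefA \<alpha> * (\<Delta> \<alpha>)\<^sup>2 + 2 * coefB \<alpha> * \<Delta> \<alpha> + coefC \<alpha>) / normS \<alpha>) / \<bar>\<Delta> \<alpha>\<bar>"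
      by (simp add: real_sqrt_divide real_sqrt_mult mult.commute)
    thus ?thesis unfolding tau_eff_inv_def using D by (simp add: field_simps)
  qed
  have "((\<lambda>\<alpha>. (sqrt 2 / 2) * sqrt ((coefA \<alpha> + 2 * (2 powr \<alpha> * coefB \<alpha>) * y \<alpha> + (4 powr \<alpha> * coefC \<alpha>) * (y \<alpha>)\<^sup>2) / normS \<alpha>))
      \<longlongrightarrow> (sqrt 2 / 2) * sqrt ((4 + 2 * (-12) * (0 * (1/k)) + 40 * (0 * (1/k))\<^sup>2) / 2)) at_top"
    by (intro tendsto_mult_left tendsto_real_sqrt tendsto_divide tendsto_add tendsto_mult
        tendsto_power A_lim B_lim C_lim normS_lim y0 tendsto_const) simp
  moreover have "(sqrt 2 / 2) * sqrt ((4 + 2 * (-12) * (0 * (1/k)) + 40 * (0 * (1/k))\<^sup>2) / 2) = (1::real)"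
    by simp
  ultimately have "((\<lambda>\<alpha>. (sqrt 2 / 2) * sqrt ((coefA \<alpha> + 2 * (2 powr \<alpha> * coefB \<alpha>) * y \<alpha> + (4 powr \<alpha> * coefC \<alpha>) * (y \<alpha>)\<^sup>2) / normS \<alpha>))
      \<longlongrightarrow> 1) at_top" by simp
  thus "((\<lambda>\<alpha>. tau_eff_inv \<alpha> (\<Delta> \<alpha>) / (\<bar>\<Delta> \<alpha>\<bar> / sqrt 2)) \<longlongrightarrow> 1) at_top"
  proof (rule Lim_transform_eventually)
    show "\<forall>\<^sub>F \<alpha> in at_top. (sqrt 2 / 2) * sqrt ((coefA \<alpha> + 2 * (2 powr \<alpha> * coefB \<alpha>) * y \<alpha> + (4 powr \<alpha> * coefC \<alpha>) * (y \<alpha>)\<^sup>2) / normS \<alpha>)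
       = tau_eff_inv \<alpha> (\<Delta> \<alpha>) / (\<bar>\<Delta> \<alpha>\<bar> / sqrt 2)"
      using ev by (rule eventually_mono) (rule key[symmetric])
  qed
qed


end
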